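(* Let $\mathcal{T}$ be a finite or countably infinite set and let $\mathbf{p} \ne \mathbf{q}$ be probability distributions on $\mathcal{T}$. Then there exists a strict total order $\prec^*$ on $\mathcal{T}$ such that the associated rank statistic $R$ is not uniformly distributed on $\{0,1\}$ for $m = 1$, and hence for every $m \ge 1$ the associated rank statistic is not uniformly distributed on $\{0,1,\dots,m\}$. Here, for a strict total order $\prec$ and a positive integer $m$, the associated rank statistic is $R = \sum_{j=1}^m \big(\mathbb{I}[X_j \prec X_0] + \mathbb{I}[X_j = X_0, U_j < U_0]\big)$, where $X_0 \sim \mathbf{q}$, $X_1,\dots,X_m \sim^{\mathrm{iid}} \mathbf{p}$, $U_0,\dots,U_m \sim^{\mathrm{iid}} \mathrm{Uniform}(0,1)$ are mutually independent.
   Context: $\mathbb{I}[\cdot]$ denotes the indicator of an event. *)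

theory Defs
  imports "HOL-Probability.Probability"
begin

definition rank_space :: "'a pmf \<Rightarrow> 'a pmf \<Rightarrow> nat \<Rightarrow> ('a \<times> (nat \<Rightarrow> 'a) \<times> (nat \<Rightarrow> real)) measure" where
  "rank_space p q m =
     measure_pmf q \<Otimes>\<^sub>M
       (PiM {1..m} (\<lambda>_. measure_pmf p) \<Otimes>\<^sub>M
        PiM {0..m} (\<lambda>_. uniform_measure lborel {0<..<1::real}))"

text \<open>Rank statistic R = sum_{j=1}^m (I[X_j < X_0] + I[X_j = X_0 and U_j < U_0]),
  where the strict order is given as a relation r, (a, b) in r meaning a precedes b.\<close>
definition rank_stat :: "('a \<times> 'a) set \<Rightarrow> nat \<Rightarrow> ('a \<times> (nat \<Rightarrow> 'a) \<times> (nat \<Rightarrow> real)) \<Rightarrow> nat" where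
  "rank_stat r m = (\<lambda>(x0, x, u). \<Sum>j = 1..m. of_bool ((x j, x0) \<in> r) + of_bool (x j = x0 \<and> u j < u 0))"

definition rank_uniform :: "'a pmf \<Rightarrow> 'a pmf \<Rightarrow> ('a \<times> 'a) set \<Rightarrow> nat \<Rightarrow> bool" where
  "rank_uniform p q r m =
     (\<forall>k \<in> {0..m}. measure (rank_space p q m) {\<omega> \<in> space (rank_space p q m). rank_stat r m \<omega> = k}
                    = 1 / real (m + 1))"

end

theory Submission
  imports Defs
begin

abbreviation U1 :: "real measure" where "U1 \<equiv> uniform_measure lborel {0<..<1::real}"

lemma prob_U1: "prob_space U1"
  by (rule prob_space_uniform_measure) auto

lemma nn_integral_pmf_pair:
  fixes q :: "'a pmf" and N :: "'b measure" and F :: "'a \<Rightarrow> 'b \<Rightarrow> ennreal"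
  assumes N: "prob_space N" and F: "\<And>a. F a \<in> borel_measurable N"
  shows "(\<integral>\<^sup>+\<omega>. F (fst \<omega>) (snd \<omega>) \<partial>(measure_pmf q \<Otimes>\<^sub>M N)) = (\<integral>\<^sup>+a. \<integral>\<^sup>+y. F a y \<partial>N \<partial>q)"
proof -
  interpret N: prob_space N by fact
  define S where "S = set_pmf q"
  obtain s0 where s0: "s0 \<in> S" unfolding S_def using set_pmf_not_empty[of q] by blast
  define g where "g a = (if a \<in> S then a else s0)" for a
  define G where "G \<omega> = F (g (fst \<omega>)) (snd \<omega>) * indicator S (fst \<omega>)" for \<omega>
  have Gm: "G \<in> borel_measurable (measure_pmf q \<Otimes>\<^sub>M N)"
  proof -
    have [measurable]: "(\<lambda>\<omega>. indicator S (fst \<omega>) :: ennreal) \<in> borel_measurable (measure_pmf q \<Otimes>\<^sub>M N)"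
      by (rule measurable_compose[OF measurable_fst]) simp
    have m1: "(\<lambda>\<omega>. F a (snd \<omega>) * indicator S (fst \<omega>)) \<in> borel_measurable (measure_pmf q \<Otimes>\<^sub>M N)" for a
      using F[of a] by measurable
    have m2: "(\<lambda>\<omega>. g (fst \<omega>)) \<in> measurable (measure_pmf q \<Otimes>\<^sub>M N) (count_space S)"
      by (rule measurable_compose[OF measurable_fst]) (auto simp: g_def s0)
    have cS: "countable S" unfolding S_def by simp
    show ?thesis unfolding G_def by (rule measurable_compose_countable'[OF m1 m2 cS])
  qed
  have null: "S \<times> space N \<union> (UNIV - S) \<times> space N = space (measure_pmf q \<Otimes>\<^sub>M N)"
    by (auto simp: space_pair_measure)
  have "(UNIV - S) \<times> space N \<in> null_sets (measure_pmf q \<Otimes>\<^sub>M N)"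
  proof -
    have "emeasure (measure_pmf q) (UNIV - S) = 0"
      unfolding S_def by (simp add: measure_pmf.emeasure_eq_measure measure_pmf_zero_iff)
    then show ?thesis
      by (simp add: null_sets_def N.emeasure_pair_measure_Times)
  qed
  then have AE: "AE \<omega> in measure_pmf q \<Otimes>\<^sub>M N. fst \<omega> \<in> S"
    by (rule AE_I') (auto simp: space_pair_measure)
  have "(\<integral>\<^sup>+\<omega>. F (fst \<omega>) (snd \<omega>) \<partial>(measure_pmf q \<Otimes>\<^sub>M N)) = (\<integral>\<^sup>+\<omega>. G \<omega> \<partial>(measure_pmf q \<Otimes>\<^sub>M N))"
    by (rule nn_integral_cong_AE) (use AE in \<open>auto simp: G_def g_def\<close>)
  also have "\<dots> = (\<integral>\<^sup>+a. \<integral>\<^sup>+y. G (a, y) \<partial>N \<partial>q)"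
    by (rule N.nn_integral_fst[symmetric]) (rule Gm)
  also have "\<dots> = (\<integral>\<^sup>+a. \<integral>\<^sup>+y. F a y \<partial>N \<partial>q)"
  proof (rule nn_integral_cong_AE)
    show "AE a in measure_pmf q. (\<integral>\<^sup>+y. G (a, y) \<partial>N) = (\<integral>\<^sup>+y. F a y \<partial>N)"
      using AE_measure_pmf[of q] by eventually_elim (auto simp: G_def g_def S_def)
  qed
  finally show ?thesis .
qed

lemma nn_integral_PiM_pmf_component:
  fixes p :: "'a pmf"
  assumes "j \<in> I"
  shows "(\<integral>\<^sup>+x. \<phi> (x j) \<partial>PiM I (\<lambda>_. measure_pmf p)) = (\<integral>\<^sup>+y. \<phi> y \<partial>p)"
proof -
  have "(\<integral>\<^sup>+y. \<phi> y \<partial>p) = (\<integral>\<^sup>+y. \<phi> y \<partial>distr (PiM I (\<lambda>_. measure_pmf p)) (measure_pmf p) (\<lambda>\<omega>. \<omega> j))"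
    by (subst distr_PiM_component) (use assms in \<open>auto intro: measure_pmf.prob_space_axioms\<close>)
  also have "\<dots> = (\<integral>\<^sup>+x. \<phi> (x j) \<partial>PiM I (\<lambda>_. measure_pmf p))"
    by (rule nn_integral_distr) (use assms in auto)
  finally show ?thesis ..
qed

lemma nn_integral_PiM_U1_pair:
  assumes "i \<in> I" "j \<in> I" "i \<noteq> j" and \<psi>: "\<psi> \<in> borel_measurable (U1 \<Otimes>\<^sub>M U1)"
  shows "(\<integral>\<^sup>+u. \<psi> (u i, u j) \<partial>PiM I (\<lambda>_. U1)) = (\<integral>\<^sup>+z. \<psi> z \<partial>(U1 \<Otimes>\<^sub>M U1))"
proof -
  define f where "f b = (if b then i else j)" for b
  have inj: "inj_on f UNIV" using assms by (auto simp: f_def inj_on_def split: if_splits)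
  have fI: "f \<in> UNIV \<rightarrow> I" using assms by (auto simp: f_def)
  have D1: "distr (PiM I (\<lambda>_. U1)) (PiM UNIV (\<lambda>_. U1)) (\<lambda>\<omega>. \<lambda>n\<in>UNIV. \<omega> (f n)) = PiM UNIV (\<lambda>_. U1)"
    using distr_PiM_reindex[of I "\<lambda>_. U1" f UNIV] inj fI prob_U1 by simp
  have cb: "case_bool U1 U1 = (\<lambda>_. U1)" by (rule ext) (simp split: bool.split)
  have D2: "U1 \<Otimes>\<^sub>M U1 = distr (PiM UNIV (\<lambda>_. U1)) (U1 \<Otimes>\<^sub>M U1) (\<lambda>x. (x True, x False))"
  proof -
    have sf: "sigma_finite_measure U1" by (rule prob_space_imp_sigma_finite[OF prob_U1])
    show ?thesis using pair_measure_eq_distr_PiM[OF sf sf] by (simp add: cb)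
  qed
  have "(\<integral>\<^sup>+z. \<psi> z \<partial>(U1 \<Otimes>\<^sub>M U1)) = (\<integral>\<^sup>+x. \<psi> (x True, x False) \<partial>PiM UNIV (\<lambda>_. U1))"
    by (subst D2, rule nn_integral_distr) (auto intro: \<psi>)
  also have "\<dots> = (\<integral>\<^sup>+x. \<psi> (x True, x False) \<partial>distr (PiM I (\<lambda>_. U1)) (PiM UNIV (\<lambda>_. U1)) (\<lambda>\<omega>. \<lambda>n\<in>UNIV. \<omega> (f n)))"
    by (simp add: D1)
  also have "\<dots> = (\<integral>\<^sup>+u. \<psi> (u i, u j) \<partial>PiM I (\<lambda>_. U1))"
  proof -
    have me1: "(\<lambda>\<omega>. \<lambda>n\<in>UNIV. \<omega> (f n)) \<in> PiM I (\<lambda>_. U1) \<rightarrow>\<^sub>M PiM UNIV (\<lambda>_. U1)"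
      by (rule measurable_restrict) (use fI in \<open>auto intro: measurable_component_singleton\<close>)
    have me2: "(\<lambda>x. \<psi> (x True, x False)) \<in> borel_measurable (PiM UNIV (\<lambda>_. U1))"
      by (rule measurable_compose[OF _ \<psi>], rule measurable_Pair)
        (auto intro: measurable_component_singleton)
    have me3: "(\<lambda>x. \<psi> (x True, x False)) \<in> borel_measurable (distr (PiM I (\<lambda>_. U1)) (PiM UNIV (\<lambda>_. U1)) (\<lambda>\<omega>. \<lambda>n\<in>UNIV. \<omega> (f n)))"
      by (subst measurable_distr_eq1) (rule me2)
    show ?thesis using nn_integral_distr[OF me1 me3] by (simp add: f_def)
  qed
  finally show ?thesis ..
qed

definition cU :: ennreal where
  "cU = (\<integral>\<^sup>+z. of_bool (snd z < fst z) \<partial>(U1 \<Otimes>\<^sub>M U1))"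

definition Theta :: "'a pmf \<Rightarrow> 'a pmf \<Rightarrow> ('a \<times> 'a) set \<Rightarrow> ennreal" where
  "Theta p q r = (\<integral>\<^sup>+a. \<integral>\<^sup>+y. (of_bool ((y, a) \<in> r) + of_bool (y = a) * cU) \<partial>p \<partial>q)"

lemma prob_rank_space: "prob_space (rank_space p q m)"
  unfolding rank_space_def
  by (intro prob_space_pair prob_space_PiM prob_U1 measure_pmf.prob_space_axioms)

lemma expect_rank_stat:
  "(\<integral>\<^sup>+\<omega>. of_nat (rank_stat r m \<omega>) \<partial>rank_space p q m) = of_nat m * Theta p q r"
proof -
  define P where "P = PiM {1..m} (\<lambda>_. measure_pmf p)"
  define U where "U = PiM {0..m} (\<lambda>_. U1)"
  have probP: "prob_space P" unfolding P_def by (intro prob_space_PiM measure_pmf.prob_space_axioms)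
  have probU: "prob_space U" unfolding U_def by (intro prob_space_PiM prob_U1)
  interpret U: prob_space U by (rule probU)
  interpret P: prob_space P by (rule probP)
  define g where "g a j xu = (of_bool ((fst xu j, a) \<in> r) + of_bool (fst xu j = a \<and> snd xu j < snd xu 0) :: ennreal)" for a j and xu :: "(nat \<Rightarrow> 'a) \<times> (nat \<Rightarrow> real)"
  have gm: "g a j \<in> borel_measurable (P \<Otimes>\<^sub>M U)" if "j \<in> {1..m}" for a j
  proof -
    have x: "(\<lambda>xu. fst xu j) \<in> measurable (P \<Otimes>\<^sub>M U) (measure_pmf p)"
      unfolding P_def using that by measurable
    have [measurable]: "(\<lambda>xu. of_bool ((fst xu j, a) \<in> r) :: ennreal) \<in> borel_measurable (P \<Otimes>\<^sub>M U)"
      by (rule measurable_compose[OF x]) simp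
    have [measurable]: "(\<lambda>xu. fst xu j = a) \<in> measurable (P \<Otimes>\<^sub>M U) (count_space UNIV)"
      by (rule measurable_compose[OF x]) simp
    have j0: "j \<in> {0..m}" using that by auto
    have [measurable]: "(\<lambda>xu. snd xu j) \<in> borel_measurable (P \<Otimes>\<^sub>M U)"
      unfolding U_def apply measurable using j0 by auto
    have [measurable]: "(\<lambda>xu. snd xu 0) \<in> borel_measurable (P \<Otimes>\<^sub>M U)"
      unfolding U_def by measurable
    show ?thesis unfolding g_def by measurable
  qed
  have F: "(\<lambda>xu. of_nat (rank_stat r m (a, xu)) :: ennreal) = (\<lambda>xu. \<Sum>j\<in>{1..m}. g a j xu)" for a
    by (auto simp: rank_stat_def g_def fun_eq_iff split: prod.splits)
  have inner: "(\<integral>\<^sup>+xu. g a j xu \<partial>(P \<Otimes>\<^sub>M U)) = (\<integral>\<^sup>+y. (of_bool ((y, a) \<in> r) + of_bool (y = a) * cU) \<partial>p)"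
    if j: "j \<in> {1..m}" for a j
  proof -
    have "(\<integral>\<^sup>+xu. g a j xu \<partial>(P \<Otimes>\<^sub>M U)) = (\<integral>\<^sup>+x. \<integral>\<^sup>+u. g a j (x, u) \<partial>U \<partial>P)"
      by (rule U.nn_integral_fst[symmetric]) (rule gm[OF j])
    also have "\<dots> = (\<integral>\<^sup>+x. (of_bool ((x j, a) \<in> r) + of_bool (x j = a) * cU) \<partial>P)"
    proof (rule nn_integral_cong)
      fix x
      have j0: "j \<in> {0..m}" using j by auto
      have [measurable]: "(\<lambda>w. w 0) \<in> borel_measurable U"
        unfolding U_def by measurable
      have e: "measurable U U1 = measurable U borel" by (rule measurable_cong_sets) simp_all
      have "(\<lambda>w. w j) \<in> measurable U U1" unfolding U_def using j0 by (rule measurable_component_singleton)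
      then have [measurable]: "(\<lambda>w. w j) \<in> borel_measurable U" by (simp add: e)
      have um: "(\<lambda>u. of_bool (u j < u 0) :: ennreal) \<in> borel_measurable U"
        by measurable
      have "(\<integral>\<^sup>+u. g a j (x, u) \<partial>U) = (\<integral>\<^sup>+u. (of_bool ((x j, a) \<in> r) + of_bool (x j = a) * of_bool (u j < u 0)) \<partial>U)"
        by (auto simp: g_def intro!: nn_integral_cong)
      also have "\<dots> = of_bool ((x j, a) \<in> r) + of_bool (x j = a) * (\<integral>\<^sup>+u. of_bool (u j < u 0) \<partial>U)"
        using um by (simp add: nn_integral_add nn_integral_cmult U.emeasure_space_1)
      also have "(\<integral>\<^sup>+u. of_bool (u j < u 0) \<partial>U) = cU"
        unfolding cU_def U_def
        using nn_integral_PiM_U1_pair[of 0 "{0..m}" j "\<lambda>z. of_bool (snd z < fst z)"] j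
        by simp
      finally show "(\<integral>\<^sup>+u. g a j (x, u) \<partial>U) = of_bool ((x j, a) \<in> r) + of_bool (x j = a) * cU" .
    qed
    also have "\<dots> = (\<integral>\<^sup>+y. (of_bool ((y, a) \<in> r) + of_bool (y = a) * cU) \<partial>p)"
      unfolding P_def by (rule nn_integral_PiM_pmf_component) (use j in auto)
    finally show ?thesis .
  qed
  have "(\<integral>\<^sup>+\<omega>. of_nat (rank_stat r m \<omega>) \<partial>rank_space p q m)
      = (\<integral>\<^sup>+\<omega>. (\<lambda>a xu. of_nat (rank_stat r m (a, xu))) (fst \<omega>) (snd \<omega>) \<partial>(measure_pmf q \<Otimes>\<^sub>M (P \<Otimes>\<^sub>M U)))"
    by (simp add: rank_space_def P_def U_def)
  also have "\<dots> = (\<integral>\<^sup>+a. \<integral>\<^sup>+xu. of_nat (rank_stat r m (a, xu)) \<partial>(P \<Otimes>\<^sub>M U) \<partial>q)"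
  proof (rule nn_integral_pmf_pair)
    show "prob_space (P \<Otimes>\<^sub>M U)" by (intro prob_space_pair probP probU)
    fix a show "(\<lambda>xu. of_nat (rank_stat r m (a, xu)) :: ennreal) \<in> borel_measurable (P \<Otimes>\<^sub>M U)"
      unfolding F by (intro borel_measurable_sum gm)
  qed
  also have "\<dots> = (\<integral>\<^sup>+a. of_nat m * (\<integral>\<^sup>+y. (of_bool ((y, a) \<in> r) + of_bool (y = a) * cU) \<partial>p) \<partial>q)"
  proof (rule nn_integral_cong)
    fix a
    have "(\<integral>\<^sup>+xu. of_nat (rank_stat r m (a, xu)) \<partial>(P \<Otimes>\<^sub>M U)) = (\<Sum>j\<in>{1..m}. \<integral>\<^sup>+xu. g a j xu \<partial>(P \<Otimes>\<^sub>M U))"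
      unfolding F by (rule nn_integral_sum) (rule gm)
    also have "\<dots> = (\<Sum>j\<in>{1..m}. \<integral>\<^sup>+y. (of_bool ((y, a) \<in> r) + of_bool (y = a) * cU) \<partial>p)"
      by (rule sum.cong) (auto simp: inner)
    also have "\<dots> = of_nat m * (\<integral>\<^sup>+y. (of_bool ((y, a) \<in> r) + of_bool (y = a) * cU) \<partial>p)"
      by simp
    finally show "(\<integral>\<^sup>+xu. of_nat (rank_stat r m (a, xu)) \<partial>(P \<Otimes>\<^sub>M U)) = of_nat m * (\<integral>\<^sup>+y. (of_bool ((y, a) \<in> r) + of_bool (y = a) * cU) \<partial>p)" .
  qed
  also have "\<dots> = of_nat m * Theta p q r"
    unfolding Theta_def by (rule nn_integral_cmult) simp
  finally show ?thesis .
qed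

lemma sum_real_upto: "(\<Sum>k=0..m. real k) = real m * (real m + 1) / 2"
  by (induction m) (auto simp: field_simps)

lemma rank_stat_le:
  assumes "\<And>a. (a, a) \<notin> r"
  shows "rank_stat r m \<omega> \<le> m"
proof -
  obtain x0 x u where w: "\<omega> = (x0, x, u)" by (cases \<omega>) auto
  have "rank_stat r m \<omega> \<le> (\<Sum>j=1..m. (1::nat))"
    unfolding w rank_stat_def
  proof (simp only: prod.case, rule sum_mono)
    fix j show "of_bool ((x j, x0) \<in> r) + of_bool (x j = x0 \<and> u j < u 0) \<le> (1::nat)"
      using assms[of x0] by (cases "x j = x0") auto
  qed
  then show ?thesis by simp
qed

lemma uniform_expect:
  assumes U: "rank_uniform p q r m" and irr: "\<And>a. (a, a) \<notin> r"
  shows "(\<integral>\<^sup>+\<omega>. of_nat (rank_stat r m \<omega>) \<partial>rank_space p q m) = ennreal (real m / 2)"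
proof -
  define M where "M = rank_space p q m"
  interpret M: prob_space M unfolding M_def by (rule prob_rank_space)
  define L where "L k = {\<omega> \<in> space M. rank_stat r m \<omega> = k}" for k
  have mL: "measure M (L k) = 1 / real (m + 1)" if "k \<in> {0..m}" for k
    using U that unfolding rank_uniform_def L_def M_def by blast
  have sL: "L k \<in> sets M" if "k \<in> {0..m}" for k
  proof (rule ccontr)
    assume "L k \<notin> sets M"
    then have "measure M (L k) = 0" by (rule measure_notin_sets)
    with mL[OF that] show False by simp
  qed
  have pt: "(of_nat (rank_stat r m \<omega>) :: ennreal) = (\<Sum>k\<in>{0..m}. of_nat k * indicator (L k) \<omega>)"
    if "\<omega> \<in> space M" for \<omega>
  proof -
    have "(\<Sum>k\<in>{0..m}. (of_nat k * indicator (L k) \<omega> :: ennreal)) = (\<Sum>k\<in>{0..m}. if k = rank_stat r m \<omega> then of_nat k else 0)"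
      by (rule sum.cong) (auto simp: L_def that indicator_def)
    also have "\<dots> = of_nat (rank_stat r m \<omega>)"
      using rank_stat_le[OF irr, of m \<omega>] by (simp add: sum.delta')
    finally show ?thesis ..
  qed
  have "(\<integral>\<^sup>+\<omega>. of_nat (rank_stat r m \<omega>) \<partial>M) = (\<integral>\<^sup>+\<omega>. (\<Sum>k\<in>{0..m}. of_nat k * indicator (L k) \<omega>) \<partial>M)"
    by (rule nn_integral_cong) (rule pt)
  also have "\<dots> = (\<Sum>k\<in>{0..m}. \<integral>\<^sup>+\<omega>. of_nat k * indicator (L k) \<omega> \<partial>M)"
    by (rule nn_integral_sum) (use sL in auto)
  also have "\<dots> = (\<Sum>k\<in>{0..m}. ennreal (real k / real (m + 1)))"
  proof (rule sum.cong)
    fix k assume k: "k \<in> {0..m}"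
    have "(\<integral>\<^sup>+\<omega>. of_nat k * indicator (L k) \<omega> \<partial>M) = of_nat k * emeasure M (L k)"
      by (rule nn_integral_cmult_indicator) (rule sL[OF k])
    also have "\<dots> = ennreal (real k) * ennreal (1 / real (m + 1))"
      by (simp add: M.emeasure_eq_measure mL[OF k] ennreal_of_nat_eq_real_of_nat)
    also have "\<dots> = ennreal (real k / real (m + 1))"
      by (simp add: ennreal_mult[symmetric])
    finally show "(\<integral>\<^sup>+\<omega>. of_nat k * indicator (L k) \<omega> \<partial>M) = ennreal (real k / real (m + 1))" .
  qed simp
  also have "\<dots> = ennreal (\<Sum>k\<in>{0..m}. real k / real (m + 1))"
    by (rule sum_ennreal) simp
  also have "(\<Sum>k\<in>{0..m}. real k / real (m + 1)) = real m / 2"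
    by (simp add: sum_divide_distrib[symmetric] sum_real_upto field_simps)
  finally show ?thesis unfolding M_def .
qed

lemma uniform_Theta:
  assumes U: "rank_uniform p q r m" and irr: "\<And>a. (a, a) \<notin> r" and m: "m \<ge> 1"
  shows "Theta p q r = ennreal (1/2)"
proof -
  have "of_nat m * Theta p q r = ennreal (real m / 2)"
    using expect_rank_stat[where r=r and m=m and p=p and q=q] uniform_expect[OF U irr] by simp
  also have "\<dots> = ennreal (real m) * ennreal (1/2)"
    by (subst ennreal_mult[symmetric]) auto
  also have "\<dots> = of_nat m * ennreal (1/2)"
    by (simp only: ennreal_of_nat_eq_real_of_nat)
  finally have "of_nat m * Theta p q r = of_nat m * ennreal (1/2)" .
  then show ?thesis using m by (subst (asm) ennreal_mult_cancel_left) auto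
qed

lemma emeasure_pmf_diff_single:
  assumes "set_pmf p \<subseteq> T" "t \<in> T"
  shows "emeasure (measure_pmf p) (T - {t}) = ennreal (1 - pmf p t)"
proof -
  have T1: "measure (measure_pmf p) T = 1"
    using assms(1) by (subst measure_pmf.prob_eq_1) (auto simp: AE_measure_pmf_iff)
  have "measure (measure_pmf p) (T - {t}) = measure (measure_pmf p) T - measure (measure_pmf p) {t}"
    using assms(2) by (subst measure_pmf.finite_measure_Diff) auto
  then show ?thesis using T1 by (simp add: measure_pmf.emeasure_eq_measure measure_pmf_single)
qed

lemma Theta_shift:
  assumes pw: "\<And>a y. (of_bool ((y, a) \<in> rA) + of_bool (a = t \<and> y \<in> T - {t}) :: ennreal)
                     = of_bool ((y, a) \<in> rB) + of_bool (y = t \<and> a \<in> T - {t})"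
    and p: "set_pmf p \<subseteq> T" and q: "set_pmf q \<subseteq> T" and t: "t \<in> T"
    and A: "Theta p q rA = ennreal (1/2)" and B: "Theta p q rB = ennreal (1/2)"
  shows "pmf p t = pmf q t"
proof -
  have add: "Theta p q r + (\<integral>\<^sup>+a. \<integral>\<^sup>+y. X a y \<partial>p \<partial>q)
      = (\<integral>\<^sup>+a. \<integral>\<^sup>+y. (of_bool ((y, a) \<in> r) + of_bool (y = a) * cU + X a y) \<partial>p \<partial>q)" for r X
    unfolding Theta_def by (simp add: nn_integral_add)
  have "Theta p q rA + (\<integral>\<^sup>+a. \<integral>\<^sup>+y. of_bool (a = t \<and> y \<in> T - {t}) \<partial>p \<partial>q)
      = Theta p q rB + (\<integral>\<^sup>+a. \<integral>\<^sup>+y. of_bool (y = t \<and> a \<in> T - {t}) \<partial>p \<partial>q)"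
    unfolding add
  proof (intro nn_integral_cong)
    fix a y
    show "of_bool ((y, a) \<in> rA) + of_bool (y = a) * cU + of_bool (a = t \<and> y \<in> T - {t}) =
          of_bool ((y, a) \<in> rB) + of_bool (y = a) * cU + of_bool (y = t \<and> a \<in> T - {t})"
      using pw[of y a] by (simp add: ac_simps)
  qed
  also have "(\<integral>\<^sup>+a. \<integral>\<^sup>+y. of_bool (a = t \<and> y \<in> T - {t}) \<partial>p \<partial>q) = ennreal (pmf q t * (1 - pmf p t))"
  proof -
    have "(\<integral>\<^sup>+a. \<integral>\<^sup>+y. of_bool (a = t \<and> y \<in> T - {t}) \<partial>p \<partial>q)
        = (\<integral>\<^sup>+a. ennreal (1 - pmf p t) * indicator {t} a \<partial>q)"
    proof (rule nn_integral_cong)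
      fix a
      have "(\<integral>\<^sup>+y. of_bool (a = t \<and> y \<in> T - {t}) \<partial>p) = (\<integral>\<^sup>+y. indicator {t} a * indicator (T - {t}) y \<partial>p)"
        by (rule nn_integral_cong) (auto simp: indicator_def)
      also have "\<dots> = indicator {t} a * emeasure (measure_pmf p) (T - {t})"
        by (simp add: nn_integral_cmult)
      finally show "(\<integral>\<^sup>+y. of_bool (a = t \<and> y \<in> T - {t}) \<partial>p) = ennreal (1 - pmf p t) * indicator {t} a"
        using emeasure_pmf_diff_single[OF p t] by (simp add: mult.commute)
    qed
    also have "\<dots> = ennreal (1 - pmf p t) * ennreal (pmf q t)"
      by (simp add: emeasure_pmf_single)
    also have "\<dots> = ennreal (pmf q t * (1 - pmf p t))"
      by (simp add: ennreal_mult[symmetric] pmf_le_1 mult.commute)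
    finally show ?thesis .
  qed
  also have "(\<integral>\<^sup>+a. \<integral>\<^sup>+y. of_bool (y = t \<and> a \<in> T - {t}) \<partial>p \<partial>q) = ennreal (pmf p t * (1 - pmf q t))"
  proof -
    have "(\<integral>\<^sup>+a. \<integral>\<^sup>+y. of_bool (y = t \<and> a \<in> T - {t}) \<partial>p \<partial>q)
        = (\<integral>\<^sup>+a. ennreal (pmf p t) * indicator (T - {t}) a \<partial>q)"
    proof (rule nn_integral_cong)
      fix a
      have "(\<integral>\<^sup>+y. of_bool (y = t \<and> a \<in> T - {t}) \<partial>p) = (\<integral>\<^sup>+y. indicator (T - {t}) a * indicator {t} y \<partial>p)"
        by (rule nn_integral_cong) (auto simp: indicator_def)
      also have "\<dots> = indicator (T - {t}) a * emeasure (measure_pmf p) {t}"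
        by (simp add: nn_integral_cmult)
      finally show "(\<integral>\<^sup>+y. of_bool (y = t \<and> a \<in> T - {t}) \<partial>p) = ennreal (pmf p t) * indicator (T - {t}) a"
        by (simp add: mult.commute emeasure_pmf_single)
    qed
    also have "\<dots> = ennreal (pmf p t) * ennreal (1 - pmf q t)"
      using emeasure_pmf_diff_single[OF q t] by (subst nn_integral_cmult_indicator) auto
    also have "\<dots> = ennreal (pmf p t * (1 - pmf q t))"
      by (simp add: ennreal_mult[symmetric] pmf_le_1)
    finally show ?thesis .
  qed
  finally have "ennreal (pmf q t * (1 - pmf p t)) = ennreal (pmf p t * (1 - pmf q t))"
    unfolding A B by (simp add: ennreal_add_left_cancel)
  then have "pmf q t * (1 - pmf p t) = pmf p t * (1 - pmf q t)"
    by (subst (asm) ennreal_inj) (auto simp: pmf_le_1)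
  then show ?thesis by (simp add: algebra_simps)
qed

definition key_rel :: "('a \<Rightarrow> real) \<Rightarrow> 'a set \<Rightarrow> ('a \<times> 'a) set" where
  "key_rel k T = {(a, b). a \<in> T \<and> b \<in> T \<and> k a < k b}"

lemma key_rel_slo:
  assumes "inj_on k T"
  shows "strict_linear_order_on T (key_rel k T)" "key_rel k T \<subseteq> T \<times> T" "\<And>a. (a, a) \<notin> key_rel k T"
proof -
  show "strict_linear_order_on T (key_rel k T)"
    unfolding strict_linear_order_on_def key_rel_def
  proof (intro conjI)
    show "trans {(a, b). a \<in> T \<and> b \<in> T \<and> k a < k b}" by (auto simp: trans_def)
    show "irrefl {(a, b). a \<in> T \<and> b \<in> T \<and> k a < k b}" by (auto simp: irrefl_def)
    show "total_on T {(a, b). a \<in> T \<and> b \<in> T \<and> k a < k b}"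
      using assms by (auto simp: total_on_def inj_on_def) (meson linorder_neqE_linordered_idom)
  qed
  show "key_rel k T \<subseteq> T \<times> T" "\<And>a. (a, a) \<notin> key_rel k T" by (auto simp: key_rel_def)
qed

lemma good_order:
  assumes "Theta p q r \<noteq> ennreal (1/2)" "\<And>a. (a, a) \<notin> r"
  shows "\<forall>m\<ge>1. \<not> rank_uniform p q r m"
  using uniform_Theta assms by blast

theorem theorem3p6:
  fixes T :: "'a set" and p q :: "'a pmf"
  assumes "countable T"
    and "set_pmf p \<subseteq> T" and "set_pmf q \<subseteq> T"
    and "p \<noteq> q"
  shows "\<exists>r. strict_linear_order_on T r \<and> r \<subseteq> T \<times> T \<and>
             \<not> rank_uniform p q r 1 \<and> (\<forall>m\<ge>1. \<not> rank_uniform p q r m)"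
proof -
  have "\<exists>t. pmf p t \<noteq> pmf q t"
  proof (rule ccontr)
    assume "\<not> (\<exists>t. pmf p t \<noteq> pmf q t)"
    then have "p = q" by (intro pmf_eqI) auto
    with assms(4) show False by simp
  qed
  then obtain t where pt: "pmf p t \<noteq> pmf q t" by blast
  have tT: "t \<in> T"
  proof (rule ccontr)
    assume "t \<notin> T"
    then have "t \<notin> set_pmf p" "t \<notin> set_pmf q" using assms(2,3) by auto
    then show False using pt by (simp add: set_pmf_eq)
  qed
  define h where "h a = arctan (real (to_nat_on T a))" for a
  have hinj: "inj_on h T"
  proof (rule inj_onI)
    fix x y assume "x \<in> T" "y \<in> T" "h x = h y"
    then show "x = y" using inj_on_to_nat_on[OF assms(1)] unfolding h_def inj_on_def
      by (simp add: arctan_eq_iff)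
  qed
  have h0: "0 \<le> h a" for a unfolding h_def by (simp add: zero_le_arctan_iff)
  have h2: "h a < 2" for a
  proof -
    have "h a < pi / 2" unfolding h_def by (rule arctan_ubound)
    also have "\<dots> < 2" using pi_less_4 by simp
    finally show ?thesis .
  qed
  define kA where "kA a = (if a = t then -1 else h a)" for a
  define kB where "kB a = (if a = t then 2 else h a)" for a
  have iA: "inj_on kA T"
  proof (rule inj_onI)
    fix x y assume "x \<in> T" "y \<in> T" "kA x = kA y"
    then show "x = y" using hinj h0[of x] h0[of y] unfolding kA_def inj_on_def
      by (auto split: if_splits)
  qed
  have iB: "inj_on kB T"
  proof (rule inj_onI)
    fix x y assume "x \<in> T" "y \<in> T" "kB x = kB y"
    then show "x = y" using hinj h2[of x] h2[of y] unfolding kB_def inj_on_def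
      by (auto split: if_splits)
  qed
  define rA where "rA = key_rel kA T"
  define rB where "rB = key_rel kB T"
  note A = key_rel_slo[OF iA, folded rA_def]
  note B = key_rel_slo[OF iB, folded rB_def]
  have pw: "(of_bool ((y, a) \<in> rA) + of_bool (a = t \<and> y \<in> T - {t}) :: ennreal)
                     = of_bool ((y, a) \<in> rB) + of_bool (y = t \<and> a \<in> T - {t})" for a y
  proof -
    have c1: "kA t < kA b" "kB b < kB t" if "b \<noteq> t" for b
      using h0[of b] h2[of b] that by (auto simp: kA_def kB_def)
    have c2: "kA a < kA b \<longleftrightarrow> kB a < kB b" if "a \<noteq> t" "b \<noteq> t" for a b
      using that by (simp add: kA_def kB_def)
    show ?thesis
      using c1[of a] c1[of y] c2[of y a] h0[of a] h0[of y] h2[of a] h2[of y] tT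
      by (cases "a = t"; cases "y = t") (auto simp: rA_def rB_def key_rel_def kA_def kB_def)
  qed
  have not_both: "\<not> (Theta p q rA = ennreal (1/2) \<and> Theta p q rB = ennreal (1/2))"
    using Theta_shift[OF pw assms(2,3) tT] pt by blast
  show ?thesis
  proof (cases "Theta p q rA = ennreal (1/2)")
    case False
    then have "\<forall>m\<ge>1. \<not> rank_uniform p q rA m" using good_order A(3) by blast
    then show ?thesis using A by blast
  next
    case True
    then have "Theta p q rB \<noteq> ennreal (1/2)" using not_both by blast
    then have "\<forall>m\<ge>1. \<not> rank_uniform p q rB m" using good_order B(3) by blast
    then show ?thesis using B by blast
  qed
qed

end
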